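(* Let $\mathcal A$ be a transitive Lie algebroid over $M$ with kernel $\mathcal L=\Gamma(\mathbb L)$, let $\mathring\omega$ be a background ordinary connection with associated splitting $\mathring\nabla$ and curvature $\mathring R\in\Omega^2(M,\mathbb L)$, let $\widehat\omega\in\Omega^1(\mathcal A,\mathcal L)$ be a (generalized) connection with curvature $\widehat R$ and reduced kernel endomorphism $\tau$, and let $\omega=\widehat\omega+\tau\circ\mathring\omega$ be the induced ordinary connection, with splitting $\nabla$ and curvature $R\in\Omega^2(M,\mathbb L)$. Put $\widehat F=R-\tau\circ\mathring R\in\Omega^2(M,\mathbb L)$. Then for all $X,Y\in\mathcal A$, $$\widehat R(X,Y)=\widehat F(\rho X,\rho Y)-\Big[(\mathcal D_{\rho(X)}\tau)(\mathring\omega(Y))-(\mathcal D_{\rho(Y)}\tau)(\mathring\omega(X))\Big]+R_\tau(\mathring\omega(X),\mathring\omega(Y)),$$ i.e. $\widehat R=\rho^*\widehat F-(\rho^*\mathcal D\tau)\circ\mathring\omega+\mathring\omega^*R_\tau$. Moreover, under an infinitesimal gauge transformation by $\xi\in\mathcal L$ (with $\mathring\omega$ fixed), each of the three terms $T$ of this decomposition transforms homogeneously, $T\mapsto T+[T,\xi]$ to first order in $\xi$.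
   Context: A transitive Lie algebroid over $M$: finitely generated projective $C^\infty(M)$-module $\mathcal A$ with Lie bracket and surjective $C^\infty(M)$-linear Lie morphism $\rho:\mathcal A\to\Gamma(TM)$, $[X,fY]=f[X,Y]+(\rho(X)f)Y$; kernel $\mathcal L=\ker\rho=\Gamma(\mathbb L)$, inclusion $\iota$ (we identify $\mathcal L$ with $\iota(\mathcal L)$). $\Omega^\bullet(\mathcal A,\mathcal L)$ has the Chevalley–Eilenberg differential $\hat d$ for the adjoint representation $X\cdot\gamma=[X,\iota\gamma]$ and bracket induced by that of $\mathcal L$. A (generalized) connection is any $\widehat\omega\in\Omega^1(\mathcal A,\mathcal L)$, with curvature $\widehat R=\hat d\widehat\omega+\frac12[\widehat\omega,\widehat\omega]$ (so $\widehat R(X,Y)=[X,\iota\widehat\omega(Y)]-[Y,\iota\widehat\omega(X)]-\widehat\omega([X,Y])+[\widehat\omega(X),\widehat\omega(Y)]$) and infinitesimal gauge transformation $\widehat\omega^\xi=\widehat\omega+\hat d\xi+[\widehat\omega,\xi]$. Its reduced kernel endomorphism is $\tau=\widehat\omega\circ\iota+\mathrm{Id}_{\mathcal L}\in\mathrm{End}(\mathbb L)$. An ordinary connection is given by a $C^\infty(M)$-linear splitting $\nabla:\Gamma(TM)\to\mathcal A$ of $\rho$, with 1-form $\omega$ defined by $X=\nabla_{\rho X}-\iota\omega(X)$ (equivalently $\omega\circ\iota=-\mathrm{Id}$), and curvature $R\in\Omega^2(M,\mathbb L)$ defined by $\iota R(X,Y)=[\nabla_X,\nabla_Y]-\nabla_{[X,Y]}$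 for $X,Y\in\Gamma(TM)$. For a background ordinary connection $\mathring\omega$ (splitting $\mathring\nabla$), the 1-form $\widehat\omega+\tau\circ\mathring\omega$ is an ordinary connection. For $X\in\Gamma(TM)$, $\mathcal D_X\tau\in\mathrm{End}(\mathbb L)$ is $(\mathcal D_X\tau)(\gamma)=[\nabla_X,\tau(\gamma)]-\tau([\mathring\nabla_X,\gamma])$. The algebraic curvature of $\tau$ is $R_\tau(\gamma,\eta)=[\tau(\gamma),\tau(\eta)]-\tau([\gamma,\eta])$. *)

theory Defs
  imports Main "HOL.Real_Vector_Spaces"
begin

text \<open>Algebraic (Lie--Rinehart) rendering of a transitive Lie algebroid.
  'r plays the role of C-infinity(M), 'v of the vector fields Gamma(TM),
  'a of the sections of the algebroid. The kernel L is the subspace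
  {X. rho X = 0} of 'a (L is identified with its image under the inclusion).\<close>

definition lie_algebra :: "('m::real_vector \<Rightarrow> 'm \<Rightarrow> 'm) \<Rightarrow> bool" where
  "lie_algebra br \<longleftrightarrow>
     (\<forall>a b x y z. br (a *\<^sub>R x + b *\<^sub>R y) z = a *\<^sub>R br x z + b *\<^sub>R br y z) \<and>
     (\<forall>x y. br x y = - br y x) \<and>
     (\<forall>x y z. br x (br y z) + br y (br z x) + br z (br x y) = 0)"

definition rmodule ::
  "('r::{comm_ring_1,real_algebra_1} \<Rightarrow> 'm::real_vector \<Rightarrow> 'm) \<Rightarrow> bool" where
  "rmodule sm \<longleftrightarrow>
     (\<forall>f g x. sm (f + g) x = sm f x + sm g x) \<and>
     (\<forall>f x y. sm f (x + y) = sm f x + sm f y) \<and>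
     (\<forall>f g x. sm (f * g) x = sm f (sm g x)) \<and>
     (\<forall>x. sm 1 x = x) \<and>
     (\<forall>c x. sm (of_real c) x = c *\<^sub>R x)"

definition lie_rinehart ::
  "('r::{comm_ring_1,real_algebra_1} \<Rightarrow> 'm::real_vector \<Rightarrow> 'm) \<Rightarrow>
   ('m \<Rightarrow> 'm \<Rightarrow> 'm) \<Rightarrow> ('m \<Rightarrow> 'r \<Rightarrow> 'r) \<Rightarrow> bool" where
  "lie_rinehart sm br anc \<longleftrightarrow>
     rmodule sm \<and> lie_algebra br \<and>
     (\<forall>X f g. anc X (f + g) = anc X f + anc X g) \<and>
     (\<forall>X c f. anc X (c *\<^sub>R f) = c *\<^sub>R anc X f) \<and>
     (\<forall>X f g. anc X (f * g) = f * anc X g + anc X f * g) \<and>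
     (\<forall>X Y f. anc (X + Y) f = anc X f + anc Y f) \<and>
     (\<forall>X g f. anc (sm g X) f = g * anc X f) \<and>
     (\<forall>X Y f. anc (br X Y) f = anc X (anc Y f) - anc Y (anc X f)) \<and>
     (\<forall>X Y f. br X (sm f Y) = sm f (br X Y) + sm (anc X f) Y)"

text \<open>Transitive Lie algebroid: Gamma(TM) is the Lie--Rinehart algebra (smV, brV, der),
  the algebroid is (smA, brA) with anchor der o rho, and rho is a surjective
  C-infinity-linear Lie algebra morphism.\<close>
definition transitive_lie_algebroid ::
  "('r::{comm_ring_1,real_algebra_1} \<Rightarrow> 'v::real_vector \<Rightarrow> 'v) \<Rightarrow> ('v \<Rightarrow> 'v \<Rightarrow> 'v) \<Rightarrow>
   ('v \<Rightarrow> 'r \<Rightarrow> 'r) \<Rightarrow> ('r \<Rightarrow> 'a::real_vector \<Rightarrow> 'a) \<Rightarrow> ('a \<Rightarrow> 'a \<Rightarrow> 'a) \<Rightarrow>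
   ('a \<Rightarrow> 'v) \<Rightarrow> bool" where
  "transitive_lie_algebroid smV brV der smA brA \<rho> \<longleftrightarrow>
     lie_rinehart smV brV der \<and>
     lie_rinehart smA brA (\<lambda>X. der (\<rho> X)) \<and>
     (\<forall>X Y. \<rho> (X + Y) = \<rho> X + \<rho> Y) \<and>
     (\<forall>f X. \<rho> (smA f X) = smV f (\<rho> X)) \<and>
     (\<forall>X Y. \<rho> (brA X Y) = brV (\<rho> X) (\<rho> Y)) \<and>
     surj \<rho>"

definition gen_connection ::
  "('r \<Rightarrow> 'a::real_vector \<Rightarrow> 'a) \<Rightarrow> ('a \<Rightarrow> 'v::real_vector) \<Rightarrow> ('a \<Rightarrow> 'a) \<Rightarrow> bool" where
  "gen_connection smA \<rho> \<omega> \<longleftrightarrow>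
     (\<forall>X Y. \<omega> (X + Y) = \<omega> X + \<omega> Y) \<and>
     (\<forall>f X. \<omega> (smA f X) = smA f (\<omega> X)) \<and>
     (\<forall>X. \<rho> (\<omega> X) = 0)"

definition ordinary_connection ::
  "('r \<Rightarrow> 'a::real_vector \<Rightarrow> 'a) \<Rightarrow> ('a \<Rightarrow> 'v::real_vector) \<Rightarrow> ('a \<Rightarrow> 'a) \<Rightarrow> bool" where
  "ordinary_connection smA \<rho> \<omega> \<longleftrightarrow>
     gen_connection smA \<rho> \<omega> \<and> (\<forall>\<gamma>. \<rho> \<gamma> = 0 \<longrightarrow> \<omega> \<gamma> = - \<gamma>)"

text \<open>Splitting associated with an ordinary connection: X = nabla (rho X) - omega X,
  i.e. nabla v = X + omega X for any X with rho X = v.\<close>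
definition splitting_of :: "('a::real_vector \<Rightarrow> 'v) \<Rightarrow> ('a \<Rightarrow> 'a) \<Rightarrow> 'v \<Rightarrow> 'a" where
  "splitting_of \<rho> \<omega> v = (let X = (SOME X. \<rho> X = v) in X + \<omega> X)"

definition split_curv ::
  "('a::real_vector \<Rightarrow> 'a \<Rightarrow> 'a) \<Rightarrow> ('v \<Rightarrow> 'v \<Rightarrow> 'v) \<Rightarrow> ('v \<Rightarrow> 'a) \<Rightarrow> 'v \<Rightarrow> 'v \<Rightarrow> 'a" where
  "split_curv brA brV nab v w = brA (nab v) (nab w) - nab (brV v w)"

text \<open>Reduced kernel endomorphism tau = omega o iota + Id (meaningful on L).\<close>
definition red_kernel_endo :: "('a::real_vector \<Rightarrow> 'a) \<Rightarrow> 'a \<Rightarrow> 'a" where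
  "red_kernel_endo \<omega> \<gamma> = \<omega> \<gamma> + \<gamma>"

definition induced_connection :: "('a::real_vector \<Rightarrow> 'a) \<Rightarrow> ('a \<Rightarrow> 'a) \<Rightarrow> 'a \<Rightarrow> 'a" where
  "induced_connection \<omega>h \<omega>o X = \<omega>h X + red_kernel_endo \<omega>h (\<omega>o X)"

definition gen_curv :: "('a::real_vector \<Rightarrow> 'a \<Rightarrow> 'a) \<Rightarrow> ('a \<Rightarrow> 'a) \<Rightarrow> 'a \<Rightarrow> 'a \<Rightarrow> 'a" where
  "gen_curv brA \<omega> X Y = brA X (\<omega> Y) - brA Y (\<omega> X) - \<omega> (brA X Y) + brA (\<omega> X) (\<omega> Y)"

definition Fhat ::
  "('a::real_vector \<Rightarrow> 'a \<Rightarrow> 'a) \<Rightarrow> ('v \<Rightarrow> 'v \<Rightarrow> 'v) \<Rightarrow> ('a \<Rightarrow> 'v) \<Rightarrow> ('a \<Rightarrow> 'a) \<Rightarrow> ('a \<Rightarrow> 'a)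
   \<Rightarrow> 'v \<Rightarrow> 'v \<Rightarrow> 'a" where
  "Fhat brA brV \<rho> \<omega>o \<omega>h v w =
     split_curv brA brV (splitting_of \<rho> (induced_connection \<omega>h \<omega>o)) v w
     - red_kernel_endo \<omega>h (split_curv brA brV (splitting_of \<rho> \<omega>o) v w)"

definition Dtau ::
  "('a::real_vector \<Rightarrow> 'a \<Rightarrow> 'a) \<Rightarrow> ('a \<Rightarrow> 'v) \<Rightarrow> ('a \<Rightarrow> 'a) \<Rightarrow> ('a \<Rightarrow> 'a) \<Rightarrow> 'v \<Rightarrow> 'a \<Rightarrow> 'a" where
  "Dtau brA \<rho> \<omega>o \<omega>h v \<gamma> =
     brA (splitting_of \<rho> (induced_connection \<omega>h \<omega>o) v) (red_kernel_endo \<omega>h \<gamma>)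
     - red_kernel_endo \<omega>h (brA (splitting_of \<rho> \<omega>o v) \<gamma>)"

definition alg_curv :: "('a::real_vector \<Rightarrow> 'a \<Rightarrow> 'a) \<Rightarrow> ('a \<Rightarrow> 'a) \<Rightarrow> 'a \<Rightarrow> 'a \<Rightarrow> 'a" where
  "alg_curv brA \<omega>h \<gamma> \<eta> =
     brA (red_kernel_endo \<omega>h \<gamma>) (red_kernel_endo \<omega>h \<eta>) - red_kernel_endo \<omega>h (brA \<gamma> \<eta>)"

text \<open>Infinitesimal gauge transformation omega + d xi + [omega, xi].\<close>
definition gauge :: "('a::real_vector \<Rightarrow> 'a \<Rightarrow> 'a) \<Rightarrow> ('a \<Rightarrow> 'a) \<Rightarrow> 'a \<Rightarrow> 'a \<Rightarrow> 'a" where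
  "gauge brA \<omega> \<xi> X = \<omega> X + brA X \<xi> + brA (\<omega> X) \<xi>"

definition term_F :: "('a::real_vector \<Rightarrow> 'a \<Rightarrow> 'a) \<Rightarrow> ('v \<Rightarrow> 'v \<Rightarrow> 'v) \<Rightarrow> ('a \<Rightarrow> 'v)
   \<Rightarrow> ('a \<Rightarrow> 'a) \<Rightarrow> ('a \<Rightarrow> 'a) \<Rightarrow> 'a \<Rightarrow> 'a \<Rightarrow> 'a" where
  "term_F brA brV \<rho> \<omega>o \<omega>h X Y = Fhat brA brV \<rho> \<omega>o \<omega>h (\<rho> X) (\<rho> Y)"

definition term_D :: "('a::real_vector \<Rightarrow> 'a \<Rightarrow> 'a) \<Rightarrow> ('a \<Rightarrow> 'v)
   \<Rightarrow> ('a \<Rightarrow> 'a) \<Rightarrow> ('a \<Rightarrow> 'a) \<Rightarrow> 'a \<Rightarrow> 'a \<Rightarrow> 'a" where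
  "term_D brA \<rho> \<omega>o \<omega>h X Y =
     Dtau brA \<rho> \<omega>o \<omega>h (\<rho> X) (\<omega>o Y) - Dtau brA \<rho> \<omega>o \<omega>h (\<rho> Y) (\<omega>o X)"

definition term_R :: "('a::real_vector \<Rightarrow> 'a \<Rightarrow> 'a) \<Rightarrow> ('a \<Rightarrow> 'a) \<Rightarrow> ('a \<Rightarrow> 'a) \<Rightarrow> 'a \<Rightarrow> 'a \<Rightarrow> 'a" where
  "term_R brA \<omega>o \<omega>h X Y = alg_curv brA \<omega>h (\<omega>o X) (\<omega>o Y)"

text \<open>T transforms homogeneously to first order under the gauge transformation by xi:
  t \<mapsto> T(omega^(t xi))(X,Y) is a polynomial in t whose constant coefficient is
  T(omega)(X,Y) and whose linear coefficient is [T(omega)(X,Y), xi].\<close>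
definition first_order_homogeneous ::
  "('a::real_vector \<Rightarrow> 'a \<Rightarrow> 'a) \<Rightarrow> (('a \<Rightarrow> 'a) \<Rightarrow> 'a \<Rightarrow> 'a \<Rightarrow> 'a) \<Rightarrow> ('a \<Rightarrow> 'a) \<Rightarrow> 'a \<Rightarrow> bool" where
  "first_order_homogeneous brA T \<omega> \<xi> \<longleftrightarrow>
     (\<forall>X Y. \<exists>n c. (\<forall>t::real. T (gauge brA \<omega> (t *\<^sub>R \<xi>)) X Y = (\<Sum>k\<le>n. t ^ k *\<^sub>R c k))
                 \<and> c 0 = T \<omega> X Y \<and> c 1 = brA (T \<omega> X Y) \<xi>)"

end

theory Submission
  imports Defs
begin

lemma la:
  assumes "lie_algebra br"
  shows la_add1: "br (x+y) z = br x z + br y z"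
    and la_scale1: "br (t *\<^sub>R x) z = t *\<^sub>R br x z"
    and la_anti: "br x y = - br y x"
    and la_jac: "br x (br y z) + br y (br z x) + br z (br x y) = 0"
proof -
  have L: "\<And>a b x y z. br (a *\<^sub>R x + b *\<^sub>R y) z = a *\<^sub>R br x z + b *\<^sub>R br y z"
    using assms unfolding lie_algebra_def by blast
  show "br (x+y) z = br x z + br y z" using L[of 1 x 1 y z] by simp
  show "br (t *\<^sub>R x) z = t *\<^sub>R br x z" using L[of t x 0 x z] by simp
  show "br x y = - br y x" using assms unfolding lie_algebra_def by blast
  show "br x (br y z) + br y (br z x) + br z (br x y) = 0" using assms unfolding lie_algebra_def by blast
qed

lemma la2:
  assumes "lie_algebra br"
  shows la_add2: "br x (y+z) = br x y + br x z"
    and la_scale2: "br x (t *\<^sub>R z) = t *\<^sub>R br x z"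
    and la_minus1: "br (-x) z = - br x z"
    and la_minus2: "br x (-z) = - br x z"
    and la_diff1: "br (x-y) z = br x z - br y z"
    and la_diff2: "br x (y-z) = br x y - br x z"
    and la_der: "br (br x y) z = br (br x z) y + br x (br y z)"
proof -
  note A = la_add1[OF assms] la_scale1[OF assms] la_anti[OF assms]
  have la2_1: "br x (y+z) = br x y + br x z" for x y z
  proof -
    have "br x (y+z) = - br (y+z) x" by (rule A(3))
    also have "\<dots> = - br y x - br z x" by (simp add: A(1))
    also have "\<dots> = br x y + br x z" using A(3)[of x y] A(3)[of x z] by simp
    finally show ?thesis .
  qed
  show "br x (t *\<^sub>R z) = t *\<^sub>R br x z"
  proof -
    have "br x (t *\<^sub>R z) = - br (t *\<^sub>R z) x" by (rule A(3))
    also have "\<dots> = t *\<^sub>R br x z" using A(2)[of t z x] A(3)[of x z] by simp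
    finally show ?thesis .
  qed
  show "br x (y+z) = br x y + br x z" by (rule la2_1)
  have m1: "\<And>u v. br (-u) v = - br u v" using A(2)[of "-1"] by simp
  show 3: "br (-x) z = - br x z" by (rule m1)
  show 4: "br x (-z) = - br x z" using A(3)[of x "-z"] A(3)[of z x] m1[of z x] by simp
  show "br (x-y) z = br x z - br y z" using A(1)[of x "-y" z] m1[of y z] by simp
  show "br x (y-z) = br x y - br x z" using la2_1[of x y "-z"] A(3)[of x "-z"] A(3)[of z x] m1[of z x] by simp
  have J: "br z (br x y) + br x (br y z) + br y (br z x) = 0"
    using la_jac[OF assms, of z x y] .
  have "br (br x y) z = - br z (br x y)" by (rule A(3))
  also have "\<dots> = br x (br y z) + br y (br z x)" using add.inverse_unique[of "br z (br x y)" "br x (br y z) + br y (br z x)"] J by (simp add: add.assoc)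
  also have "br y (br z x) = br (br x z) y" using A(3)[of y "br z x"] A(3)[of z x] m1[of "br x z" y] by simp
  finally show "br (br x y) z = br (br x z) y + br x (br y z)" by simp
qed

lemma add_hom:
  fixes f :: "'a::real_vector \<Rightarrow> 'b::real_vector"
  assumes "\<forall>X Y. f (X + Y) = f X + (f Y :: 'b::real_vector)"
  shows "f (x - y) = f x - f y" "f (-x) = - f x" "f 0 = 0"
proof -
  have z: "f 0 = 0"
  proof -
    have "f 0 + f 0 = f 0 + 0" using assms[rule_format, of 0 0] by simp
    then show ?thesis by (rule add_left_imp_eq)
  qed
  have m: "f (-x) = - f x" for x using assms[rule_format, of x "-x"] z by (simp add: eq_neg_iff_add_eq_0 add.commute)
  show "f (x - y) = f x - f y" using assms[rule_format, of x "-y"] m by simp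
  show "f (-x) = - f x" by (rule m)
  show "f 0 = 0" by (rule z)
qed

lemma split_wd:
  fixes \<rho> :: "'a::real_vector \<Rightarrow> 'v::real_vector"
  assumes r: "\<forall>X Y. \<rho> (X + Y) = \<rho> X + \<rho> Y"
    and w: "\<forall>X Y. \<omega> (X + Y) = \<omega> X + \<omega> Y"
    and k: "\<forall>\<gamma>. \<rho> \<gamma> = 0 \<longrightarrow> \<omega> \<gamma> = - \<gamma>"
  shows "splitting_of \<rho> \<omega> (\<rho> Z) = Z + \<omega> Z"
proof -
  define Z0 where "Z0 = (SOME X. \<rho> X = \<rho> Z)"
  have "\<rho> Z0 = \<rho> Z" unfolding Z0_def by (rule someI) (rule refl)
  then have "\<rho> (Z0 - Z) = 0" using add_hom(1)[OF r] by simp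
  then have "\<omega> (Z0 - Z) = - (Z0 - Z)" using k by blast
  then have "\<omega> Z0 - \<omega> Z = Z - Z0" using add_hom(1)[OF w] by simp
  then have "Z0 + \<omega> Z0 = Z + \<omega> Z" by (simp add: algebra_simps)
  then show ?thesis unfolding splitting_of_def Let_def Z0_def[symmetric] .
qed

lemma homog:
  assumes "\<And>X Y. \<exists>C. \<forall>t. T (gauge br \<omega> (t *\<^sub>R \<xi>)) X Y
             = T \<omega> X Y + t *\<^sub>R br (T \<omega> X Y) \<xi> + t^2 *\<^sub>R C"
  shows "first_order_homogeneous br T \<omega> \<xi>"
  unfolding first_order_homogeneous_def
proof (intro allI)
  fix X Y
  obtain C where C: "\<forall>t. T (gauge br \<omega> (t *\<^sub>R \<xi>)) X Y
             = T \<omega> X Y + t *\<^sub>R br (T \<omega> X Y) \<xi> + t^2 *\<^sub>R C" using assms by blast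
  let ?c = "\<lambda>k::nat. if k = 0 then T \<omega> X Y else if k = 1 then br (T \<omega> X Y) \<xi> else C"
  have "\<forall>t::real. T (gauge br \<omega> (t *\<^sub>R \<xi>)) X Y = (\<Sum>k\<le>2. t ^ k *\<^sub>R ?c k)"
    using C by (simp add: numeral_2_eq_2)
  then show "\<exists>n c. (\<forall>t::real. T (gauge br \<omega> (t *\<^sub>R \<xi>)) X Y = (\<Sum>k\<le>n. t ^ k *\<^sub>R c k))
                 \<and> c 0 = T \<omega> X Y \<and> c 1 = br (T \<omega> X Y) \<xi>" by (intro exI[of _ 2] exI[of _ ?c]) simp
qed

lemma gauge_tau:
  assumes "lie_algebra br"
  shows "red_kernel_endo (gauge br \<omega> (t *\<^sub>R \<xi>)) z = red_kernel_endo \<omega> z + t *\<^sub>R br (red_kernel_endo \<omega> z) \<xi>"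
  unfolding red_kernel_endo_def gauge_def
  by (simp add: la_add1[OF assms] la_scale2[OF assms] algebra_simps)

lemma gauge_nab:
  assumes "lie_algebra br"
  shows "splitting_of \<rho> (induced_connection (gauge br \<omega> (t *\<^sub>R \<xi>)) \<omega>o) v =
    splitting_of \<rho> (induced_connection \<omega> \<omega>o) v + t *\<^sub>R br (splitting_of \<rho> (induced_connection \<omega> \<omega>o) v) \<xi>"
  unfolding splitting_of_def Let_def induced_connection_def gauge_tau[OF assms]
  unfolding red_kernel_endo_def gauge_def
  by (simp add: la_add1[OF assms] la_scale2[OF assms] algebra_simps)

lemma poly2:
  assumes "lie_algebra br"
  shows "br (p + t *\<^sub>R br p \<xi>) (q + t *\<^sub>R br q \<xi>) =
     br p q + t *\<^sub>R br (br p q) \<xi> + t^2 *\<^sub>R br (br p \<xi>) (br q \<xi>)"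
  by (simp add: la_add1[OF assms] la_add2[OF assms] la_scale1[OF assms] la_scale2[OF assms]
      la_der[OF assms, of p q \<xi>] power2_eq_square algebra_simps)

theorem proposition3p6:
  fixes smV :: "'r::{comm_ring_1,real_algebra_1} \<Rightarrow> 'v::real_vector \<Rightarrow> 'v"
    and brV :: "'v \<Rightarrow> 'v \<Rightarrow> 'v"
    and der :: "'v \<Rightarrow> 'r \<Rightarrow> 'r"
    and smA :: "'r \<Rightarrow> 'a::real_vector \<Rightarrow> 'a"
    and brA :: "'a \<Rightarrow> 'a \<Rightarrow> 'a"
    and \<rho> :: "'a \<Rightarrow> 'v"
    and \<omega>o \<omega>h :: "'a \<Rightarrow> 'a"
  assumes "transitive_lie_algebroid smV brV der smA brA \<rho>"
    and "ordinary_connection smA \<rho> \<omega>o"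
    and "gen_connection smA \<rho> \<omega>h"
  shows "(\<forall>X Y. gen_curv brA \<omega>h X Y =
            Fhat brA brV \<rho> \<omega>o \<omega>h (\<rho> X) (\<rho> Y)
            - (Dtau brA \<rho> \<omega>o \<omega>h (\<rho> X) (\<omega>o Y) - Dtau brA \<rho> \<omega>o \<omega>h (\<rho> Y) (\<omega>o X))
            + alg_curv brA \<omega>h (\<omega>o X) (\<omega>o Y)) \<and>
         (\<forall>\<xi>. \<rho> \<xi> = 0 \<longrightarrow>
            first_order_homogeneous brA (term_F brA brV \<rho> \<omega>o) \<omega>h \<xi> \<and>
            first_order_homogeneous brA (term_D brA \<rho> \<omega>o) \<omega>h \<xi> \<and>
            first_order_homogeneous brA (term_R brA \<omega>o) \<omega>h \<xi>)"
proof -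
  have tla: "lie_rinehart smA brA (\<lambda>X. der (\<rho> X))" and radd: "\<forall>X Y. \<rho> (X + Y) = \<rho> X + \<rho> Y"
    and rbr: "\<forall>X Y. \<rho> (brA X Y) = brV (\<rho> X) (\<rho> Y)"
    using assms(1) unfolding transitive_lie_algebroid_def by blast+
  have la: "lie_algebra brA" using tla unfolding lie_rinehart_def by blast
  have oadd: "\<forall>X Y. \<omega>o (X + Y) = \<omega>o X + \<omega>o Y" and ok: "\<forall>\<gamma>. \<rho> \<gamma> = 0 \<longrightarrow> \<omega>o \<gamma> = - \<gamma>"
    and okr: "\<forall>X. \<rho> (\<omega>o X) = 0"
    using assms(2) unfolding ordinary_connection_def gen_connection_def by blast+
  have hadd: "\<forall>X Y. \<omega>h (X + Y) = \<omega>h X + \<omega>h Y"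
    using assms(3) unfolding gen_connection_def by blast
  note hh = add_hom[OF hadd]
  have iadd: "\<forall>X Y. induced_connection \<omega>h \<omega>o (X + Y) = induced_connection \<omega>h \<omega>o X + induced_connection \<omega>h \<omega>o Y"
    unfolding induced_connection_def red_kernel_endo_def using hadd oadd by (simp add: algebra_simps)
  have ik: "\<forall>\<gamma>. \<rho> \<gamma> = 0 \<longrightarrow> induced_connection \<omega>h \<omega>o \<gamma> = - \<gamma>"
    unfolding induced_connection_def red_kernel_endo_def using ok hh by simp
  have nabo: "splitting_of \<rho> \<omega>o (\<rho> Z) = Z + \<omega>o Z" for Z by (rule split_wd[OF radd oadd ok])
  have nab: "splitting_of \<rho> (induced_connection \<omega>h \<omega>o) (\<rho> Z) = Z + induced_connection \<omega>h \<omega>o Z" for Z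
    by (rule split_wd[OF radd iadd ik])
  note B1 = la_add1[OF la] la_add2[OF la] la_diff1[OF la] la_diff2[OF la] la_minus1[OF la] la_minus2[OF la]
  have part1: "gen_curv brA \<omega>h X Y =
            Fhat brA brV \<rho> \<omega>o \<omega>h (\<rho> X) (\<rho> Y)
            - (Dtau brA \<rho> \<omega>o \<omega>h (\<rho> X) (\<omega>o Y) - Dtau brA \<rho> \<omega>o \<omega>h (\<rho> Y) (\<omega>o X))
            + alg_curv brA \<omega>h (\<omega>o X) (\<omega>o Y)" for X Y
  proof -
    have e: "brV (\<rho> X) (\<rho> Y) = \<rho> (brA X Y)" using rbr by simp
    show ?thesis
      unfolding gen_curv_def Fhat_def split_curv_def Dtau_def alg_curv_def e nab nabo
      unfolding induced_connection_def red_kernel_endo_def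
      using la_anti[OF la, of Y X] la_anti[OF la, of Y "\<omega>h X"] la_anti[OF la, of Y "\<omega>o X"] la_anti[OF la, of Y "\<omega>h (\<omega>o X)"]
        la_anti[OF la, of "\<omega>h Y" X] la_anti[OF la, of "\<omega>h Y" "\<omega>h X"] la_anti[OF la, of "\<omega>h Y" "\<omega>o X"] la_anti[OF la, of "\<omega>h Y" "\<omega>h (\<omega>o X)"]
        la_anti[OF la, of "\<omega>o Y" X] la_anti[OF la, of "\<omega>o Y" "\<omega>h X"] la_anti[OF la, of "\<omega>o Y" "\<omega>o X"] la_anti[OF la, of "\<omega>o Y" "\<omega>h (\<omega>o X)"]
        la_anti[OF la, of "\<omega>h (\<omega>o Y)" X] la_anti[OF la, of "\<omega>h (\<omega>o Y)" "\<omega>h X"] la_anti[OF la, of "\<omega>h (\<omega>o Y)" "\<omega>o X"] la_anti[OF la, of "\<omega>h (\<omega>o Y)" "\<omega>h (\<omega>o X)"]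
      by (simp add: B1 hh hadd algebra_simps)
  qed
  have part2: "first_order_homogeneous brA (term_F brA brV \<rho> \<omega>o) \<omega>h \<xi> \<and>
            first_order_homogeneous brA (term_D brA \<rho> \<omega>o) \<omega>h \<xi> \<and>
            first_order_homogeneous brA (term_R brA \<omega>o) \<omega>h \<xi>" for \<xi>
  proof (intro conjI homog)
    fix X Y
    let ?N = "splitting_of \<rho> (induced_connection \<omega>h \<omega>o)"
    show "\<exists>C. \<forall>t. term_F brA brV \<rho> \<omega>o (gauge brA \<omega>h (t *\<^sub>R \<xi>)) X Y =
           term_F brA brV \<rho> \<omega>o \<omega>h X Y + t *\<^sub>R brA (term_F brA brV \<rho> \<omega>o \<omega>h X Y) \<xi> + t\<^sup>2 *\<^sub>R C"
      apply (rule exI[of _ "brA (brA (?N (\<rho> X)) \<xi>) (brA (?N (\<rho> Y)) \<xi>)"])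
      unfolding term_F_def Fhat_def split_curv_def gauge_nab[OF la] gauge_tau[OF la] poly2[OF la]
      by (simp add: B1 la_scale1[OF la] algebra_simps)
    show "\<exists>C. \<forall>t. term_D brA \<rho> \<omega>o (gauge brA \<omega>h (t *\<^sub>R \<xi>)) X Y =
           term_D brA \<rho> \<omega>o \<omega>h X Y + t *\<^sub>R brA (term_D brA \<rho> \<omega>o \<omega>h X Y) \<xi> + t\<^sup>2 *\<^sub>R C"
      apply (rule exI[of _ "brA (brA (?N (\<rho> X)) \<xi>) (brA (red_kernel_endo \<omega>h (\<omega>o Y)) \<xi>)
          - brA (brA (?N (\<rho> Y)) \<xi>) (brA (red_kernel_endo \<omega>h (\<omega>o X)) \<xi>)"])
      unfolding term_D_def Dtau_def gauge_nab[OF la] gauge_tau[OF la] poly2[OF la]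
      by (simp add: B1 la_scale1[OF la] algebra_simps)
    show "\<exists>C. \<forall>t. term_R brA \<omega>o (gauge brA \<omega>h (t *\<^sub>R \<xi>)) X Y =
           term_R brA \<omega>o \<omega>h X Y + t *\<^sub>R brA (term_R brA \<omega>o \<omega>h X Y) \<xi> + t\<^sup>2 *\<^sub>R C"
      apply (rule exI[of _ "brA (brA (red_kernel_endo \<omega>h (\<omega>o X)) \<xi>) (brA (red_kernel_endo \<omega>h (\<omega>o Y)) \<xi>)"])
      unfolding term_R_def alg_curv_def gauge_tau[OF la] poly2[OF la]
      by (simp add: B1 la_scale1[OF la] algebra_simps)
  qed
  show ?thesis using part1 part2 by blast
qed

end
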